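(* Let $\lambda>0$, let $n\ge 1$, and let $h:\mathbb{R}\to\mathbb{R}\cup\{+\infty\}$ be proper, closed and convex, such that $0\in\mathrm{dom}(h)$, $h(0)=0$, and $0$ is an accumulation point of $\mathrm{dom}(h)$. Let $\nu=(\mathcal{S}_0,\mathcal{S}_1,\mathcal{S}_\bullet)$ be a partition of $\{1,\dots,n\}$ and define $g^\nu:\mathbb{R}^n\to\mathbb{R}\cup\{+\infty\}$ by $$g^\nu(\mathbf{x})=\lambda\|\mathbf{x}\|_0+\sum_{i=1}^n h(x_i)+\eta(\mathbf{x}\in\mathcal{X}^\nu).$$ Then the convex conjugate $(g^\nu)^*$ is separable, i.e. $(g^\nu)^*(\mathbf{v})=\sum_{i=1}^n (g^\nu_i)^*(v_i)$, where for every $v\in\mathbb{R}$ $$(g^\nu_i)^*(v)=\begin{cases}0 & \text{if } i\in\mathcal{S}_0,\\ h^*(v)-\lambda & \text{if } i\in\mathcal{S}_1,\\ \max\big(h^*(v)-\lambda,0\big) & \text{if } i\in\mathcal{S}_\bullet.\end{cases}$$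
   Context: $\|\mathbf{x}\|_0$ denotes the number of nonzero entries of $\mathbf{x}$. $\eta(\cdot)$ is the convex indicator: $\eta(\text{condition})=0$ if the condition holds and $+\infty$ otherwise. For a partition $\nu=(\mathcal{S}_0,\mathcal{S}_1,\mathcal{S}_\bullet)$ of $\{1,\dots,n\}$, the region is $\mathcal{X}^\nu=\{\mathbf{x}\in\mathbb{R}^n: x_i=0\ \forall i\in\mathcal{S}_0,\ x_i\neq 0\ \forall i\in\mathcal{S}_1\}$ (entries indexed by $\mathcal{S}_\bullet$ are free). $h^*$ denotes the convex conjugate $h^*(v)=\sup_{x\in\mathbb{R}} vx-h(x)$. A point $0$ is an accumulation point of a set $\mathcal{C}\subseteq\mathbb{R}$ if every neighborhood of $0$ contains a point of $\mathcal{C}$ other than $0$. *)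

theory Defs
  imports "HOL-Analysis.Analysis"
begin

definition convex_conj :: "('a::real_inner \<Rightarrow> ereal) \<Rightarrow> 'a \<Rightarrow> ereal" where
  "convex_conj f v = (SUP x. ereal (v \<bullet> x) - f x)"

definition edom :: "('a \<Rightarrow> ereal) \<Rightarrow> 'a set" where
  "edom f = {x. f x < \<infinity>}"

definition proper_fun :: "('a \<Rightarrow> ereal) \<Rightarrow> bool" where
  "proper_fun f \<longleftrightarrow> (\<forall>x. f x \<noteq> -\<infinity>) \<and> (\<exists>x. f x < \<infinity>)"

definition epi :: "('a \<Rightarrow> ereal) \<Rightarrow> ('a \<times> real) set" where
  "epi f = {(x, t). f x \<le> ereal t}"

definition closed_fun :: "('a::topological_space \<Rightarrow> ereal) \<Rightarrow> bool" where
  "closed_fun f \<longleftrightarrow> closed (epi f)"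

definition convex_fun :: "('a::real_vector \<Rightarrow> ereal) \<Rightarrow> bool" where
  "convex_fun f \<longleftrightarrow> convex (epi f)"

definition l0norm :: "real ^ 'n \<Rightarrow> nat" where
  "l0norm x = card {i. x $ i \<noteq> 0}"

definition region :: "'n set \<Rightarrow> 'n set \<Rightarrow> (real ^ 'n) set" where
  "region S0 S1 = {x. (\<forall>i\<in>S0. x $ i = 0) \<and> (\<forall>i\<in>S1. x $ i \<noteq> 0)}"

definition eta :: "bool \<Rightarrow> ereal" where
  "eta b = (if b then 0 else \<infinity>)"

definition g_nu :: "real \<Rightarrow> (real \<Rightarrow> ereal) \<Rightarrow> 'n::finite set \<Rightarrow> 'n set \<Rightarrow> real ^ 'n \<Rightarrow> ereal" where
  "g_nu lam h S0 S1 x =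
     ereal (lam * real (l0norm x)) + (\<Sum>i\<in>UNIV. h (x $ i)) + eta (x \<in> region S0 S1)"

end

theory Submission
  imports Defs
begin

lemma sum_not_minf:
  fixes c :: "'i \<Rightarrow> ereal"
  assumes "finite I" "\<And>i. i \<in> I \<Longrightarrow> c i \<noteq> -\<infinity>"
  shows "sum c I \<noteq> -\<infinity>"
  using assms by (induction I rule: finite_induct) auto

lemma ereal_split_lt:
  fixes a b :: ereal
  assumes "a \<noteq> -\<infinity>" "b \<noteq> -\<infinity>" "ereal M < a + b"
  shows "\<exists>M1 M2. M = M1 + M2 \<and> ereal M1 < a \<and> ereal M2 < b"
proof (cases a)
  case (real ra)
  show ?thesis
  proof (cases b)
    case (real rb)
    with \<open>a = ereal ra\<close> assms(3) have "M < ra + rb" by simp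
    then show ?thesis using \<open>a = ereal ra\<close> \<open>b = ereal rb\<close>
      by (intro exI[of _ "ra - (ra + rb - M)/2"] exI[of _ "rb - (ra + rb - M)/2"]) auto
  next
    case PInf
    then show ?thesis using \<open>a = ereal ra\<close>
      by (intro exI[of _ "ra - 1"] exI[of _ "M - (ra - 1)"]) auto
  next
    case MInf with assms show ?thesis by simp
  qed
next
  case PInf
  obtain rb where "ereal rb < b" using assms(2)
    by (metis ereal_dense2 ereal_infty_less(2))
  then show ?thesis using PInf
    by (intro exI[of _ "M - rb"] exI[of _ "rb"]) auto
next
  case MInf with assms show ?thesis by simp
qed

lemma sum_approx:
  fixes c :: "'i \<Rightarrow> ereal" and f :: "'i \<Rightarrow> real \<Rightarrow> real"
  assumes "finite I"
    and "\<And>i M. i \<in> I \<Longrightarrow> ereal M < c i \<Longrightarrow> \<exists>t\<in>A i. M < f i t"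
    and "\<And>i. i \<in> I \<Longrightarrow> c i \<noteq> -\<infinity>"
  shows "ereal M < sum c I \<Longrightarrow> \<exists>x. (\<forall>i\<in>I. x i \<in> A i) \<and> M < (\<Sum>i\<in>I. f i (x i))"
  using assms
proof (induction I arbitrary: M rule: finite_induct)
  case empty
  then show ?case by simp
next
  case (insert j I)
  have "sum c I \<noteq> -\<infinity>" using sum_not_minf[of I c] insert by auto
  moreover have "ereal M < c j + sum c I" using insert by simp
  ultimately obtain M1 M2 where M: "M = M1 + M2" "ereal M1 < c j" "ereal M2 < sum c I"
    using ereal_split_lt[of "c j" "sum c I" M] insert by auto
  have "\<exists>x. (\<forall>i\<in>I. x i \<in> A i) \<and> M2 < (\<Sum>i\<in>I. f i (x i))"
    by (rule insert.IH[OF M(3)]) (use insert.prems in auto)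
  then obtain x where x: "\<forall>i\<in>I. x i \<in> A i" "M2 < (\<Sum>i\<in>I. f i (x i))"
    by blast
  have "\<exists>t\<in>A j. M1 < f j t" using insert.prems M(2) by blast
  then obtain t where t: "t \<in> A j" "M1 < f j t" by blast
  have "(\<Sum>i\<in>I. f i ((x(j:=t)) i)) = (\<Sum>i\<in>I. f i (x i))"
    using insert by (intro sum.cong) auto
  then have e: "(\<Sum>i\<in>insert j I. f i ((x(j:=t)) i)) = f j t + (\<Sum>i\<in>I. f i (x i))"
    using insert(1,2) by (simp add: sum.insert)
  have "M < (\<Sum>i\<in>insert j I. f i ((x(j:=t)) i))"
    unfolding e using x(2) t(2) M(1) by linarith
  moreover have "\<forall>i\<in>insert j I. (x(j:=t)) i \<in> A i" using x(1) t(1) by auto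
  ultimately show ?case by blast
qed

lemma small_step:
  fixes h :: "real \<Rightarrow> ereal"
  assumes proper: "proper_fun h" and convex: "convex_fun h" and h0: "h 0 = 0"
    and acc: "0 islimpt edom h" and e: "e > 0"
  shows "\<exists>t. t \<noteq> 0 \<and> h t < \<infinity> \<and> w * t - real_of_ereal (h t) > - e"
proof -
  have "\<exists>y\<in>edom h. y \<in> UNIV \<and> y \<noteq> 0"
    using acc open_UNIV UNIV_I unfolding islimpt_def by blast
  then obtain y where y: "y \<in> edom h" "y \<noteq> 0" by blast
  have "h y \<noteq> \<infinity>" "h y \<noteq> -\<infinity>" using y proper unfolding edom_def proper_fun_def by auto
  then obtain r where r: "h y = ereal r" by (cases "h y") auto
  define K where "K = \<bar>w * y - r\<bar> + 1"
  have K: "K > 0" unfolding K_def by simp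
  define s where "s = min 1 (e / (2*K))"
  have s1: "s > 0" "s \<le> 1" "s \<le> e / (2*K)"
    using K e unfolding s_def by auto
  have "s * K \<le> e / (2*K) * K" using s1 K by (intro mult_right_mono) auto
  also have "\<dots> = e / 2" using K by simp
  finally have s3: "s * K < e" using e by simp
  have "(0, 0) \<in> epi h" "(y, r) \<in> epi h" using h0 r unfolding epi_def by auto
  then have "(1 - s) *\<^sub>R (0, 0) + s *\<^sub>R (y, r) \<in> epi h"
    using convex s1 unfolding convex_fun_def by (intro convexD) auto
  then have hs: "h (s * y) \<le> ereal (s * r)" unfolding epi_def by simp
  have "h (s*y) \<noteq> -\<infinity>" using proper unfolding proper_fun_def by auto
  then obtain q where q: "h (s*y) = ereal q" using hs by (cases "h (s*y)") auto
  have q2: "q \<le> s * r" using q hs by simp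
  have "w * (s*y) - q \<ge> s * (w*y - r)" using q2 by (simp add: algebra_simps)
  moreover have "s * (w*y - r) \<ge> - (s * \<bar>w*y - r\<bar>)"
    using abs_ge_minus_self[of "s*(w*y-r)"] s1 by (simp add: abs_mult)
  moreover have "s * \<bar>w*y - r\<bar> \<le> s * K" using s1 unfolding K_def
    by (intro mult_left_mono) auto
  ultimately have "w * (s*y) - q > - e" using s3 by linarith
  then show ?thesis using q s1 y
    by (intro exI[of _ "s*y"]) auto
qed

lemma conj_ge:
  "ereal (w * t) - h t \<le> convex_conj h w"
  unfolding convex_conj_def by (rule SUP_upper2[of t]) auto

lemma S1_case:
  fixes h :: "real \<Rightarrow> ereal"
  assumes proper: "proper_fun h" and convex: "convex_fun h" and h0: "h 0 = 0"
    and acc: "0 islimpt edom h"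
    and M: "ereal M < convex_conj h w - ereal lam"
  shows "\<exists>t. t \<noteq> 0 \<and> h t < \<infinity> \<and> M < w * t - real_of_ereal (h t) - lam"
proof -
  have "ereal (M + lam) < convex_conj h w" using M
    by (cases "convex_conj h w") auto
  then obtain x0 where x0: "ereal (M + lam) < ereal (w * x0) - h x0"
    unfolding convex_conj_def less_SUP_iff by auto
  show ?thesis
  proof (cases "x0 = 0")
    case True
    then have "M + lam < 0" using x0 h0 by simp
    then obtain t where "t \<noteq> 0" "h t < \<infinity>" "w * t - real_of_ereal (h t) > M + lam"
      using small_step[OF proper convex h0 acc, of "-(M+lam)" w] by auto
    then show ?thesis by (intro exI[of _ t]) auto
  next
    case False
    have "h x0 \<noteq> \<infinity>" using x0 by auto
    moreover have "h x0 \<noteq> -\<infinity>" using proper unfolding proper_fun_def by auto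
    ultimately obtain r where r: "h x0 = ereal r" by (cases "h x0") auto
    then show ?thesis using x0 False by (intro exI[of _ x0]) auto
  qed
qed

theorem proposition3p2:
  fixes lam :: real and h :: "real \<Rightarrow> ereal"
    and S0 S1 Sb :: "'n::finite set"
  assumes lam_pos: "lam > 0"
    and proper: "proper_fun h" and closed: "closed_fun h" and convex: "convex_fun h"
    and h0: "h 0 = 0"
    and acc: "0 islimpt edom h"
    and partition: "S0 \<union> S1 \<union> Sb = UNIV" "S0 \<inter> S1 = {}" "S0 \<inter> Sb = {}" "S1 \<inter> Sb = {}"
  shows "\<forall>v :: real ^ 'n. convex_conj (g_nu lam h S0 S1) v =
           (\<Sum>i\<in>UNIV.
              (if i \<in> S0 then 0
               else if i \<in> S1 then convex_conj h (v $ i) - ereal lam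
               else max (convex_conj h (v $ i) - ereal lam) 0))"
proof
  fix v :: "real ^ 'n"
  define c where "c i = (if i \<in> S0 then 0 else if i \<in> S1 then convex_conj h (v $ i) - ereal lam
               else max (convex_conj h (v $ i) - ereal lam) 0)" for i
  define A where "A i = (if i \<in> S0 then {0} else if i \<in> S1 then {t. t \<noteq> 0 \<and> h t < \<infinity>}
               else {t. h t < \<infinity>})" for i
  define f where "f i t = v$i * t - real_of_ereal (h t) - (if t = 0 then 0 else lam)" for i t
  have hnm: "h t \<noteq> -\<infinity>" for t using proper unfolding proper_fun_def by auto
  have conj0: "convex_conj h w \<ge> 0" for w using conj_ge[of w 0 h] h0 by (simp add: zero_ereal_def)
  have val: "ereal (v \<bullet> x) - g_nu lam h S0 S1 x = ereal (\<Sum>i\<in>UNIV. f i (x$i))"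
    if xr: "x \<in> region S0 S1" and hf: "\<forall>i. h (x$i) < \<infinity>" for x
  proof -
    have hr: "h (x$i) = ereal (real_of_ereal (h (x$i)))" for i
      using hf hnm[of "x$i"] by (cases "h (x$i)") auto
    have sh: "(\<Sum>i\<in>UNIV. h (x$i)) = ereal (\<Sum>i\<in>UNIV. real_of_ereal (h (x$i)))"
      by (subst hr) (simp add: sum_ereal)
    have "real (l0norm x) = (\<Sum>i\<in>UNIV. if x$i = 0 then 0 else 1)"
      unfolding l0norm_def by (simp add: sum.If_cases Collect_neg_eq)
    then have l0: "lam * real (l0norm x) = (\<Sum>i\<in>UNIV. if x$i = 0 then 0 else lam)"
      by (simp only: sum_distrib_left) (auto intro: sum.cong)
    have inn: "v \<bullet> x = (\<Sum>i\<in>UNIV. v$i * x$i)" by (simp add: inner_vec_def)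
    have "ereal (v \<bullet> x) - g_nu lam h S0 S1 x
       = ereal (v \<bullet> x - lam * real (l0norm x) - (\<Sum>i\<in>UNIV. real_of_ereal (h (x$i))))"
      unfolding g_nu_def sh eta_def using xr by simp
    also have "\<dots> = ereal (\<Sum>i\<in>UNIV. f i (x$i))"
      unfolding l0 inn f_def by (simp add: sum_subtractf)
    finally show ?thesis .
  qed
  show "convex_conj (g_nu lam h S0 S1) v = sum c UNIV"
  proof (rule antisym)
    show "convex_conj (g_nu lam h S0 S1) v \<le> sum c UNIV"
      unfolding convex_conj_def
    proof (rule SUP_least)
      fix x :: "real ^ 'n"
      show "ereal (v \<bullet> x) - g_nu lam h S0 S1 x \<le> sum c UNIV"
      proof (cases "x \<in> region S0 S1 \<and> (\<forall>i. h (x$i) < \<infinity>)")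
        case False
        have "g_nu lam h S0 S1 x = \<infinity>"
        proof (cases "x \<in> region S0 S1")
          case False
          then show ?thesis unfolding g_nu_def eta_def by simp
        next
          case True
          with \<open>\<not> (x \<in> region S0 S1 \<and> _)\<close> have "\<not> (\<forall>i. h (x$i) < \<infinity>)" by blast
          then have "(\<Sum>i\<in>UNIV. h (x$i)) = \<infinity>" by (simp add: sum_Pinfty)
          then show ?thesis unfolding g_nu_def by simp
        qed
        then show ?thesis by simp
      next
        case True
        have "ereal (f i (x$i)) \<le> c i" for i
        proof -
          obtain r where r: "h (x$i) = ereal r"
            using True hnm[of "x$i"] by (cases "h (x$i)") auto
          have cg: "ereal (v$i * x$i - r) \<le> convex_conj h (v$i)"
            using conj_ge[of "v$i" "x$i" h] r by simp
          have cg2: "ereal (v$i * x$i - r - lam) \<le> convex_conj h (v$i) - ereal lam"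
            using cg by (cases "convex_conj h (v$i)") auto
          show ?thesis
          proof (cases "i \<in> S0")
            case True
            with \<open>x \<in> region S0 S1 \<and> _\<close> have "x$i = 0" unfolding region_def by auto
            then show ?thesis using True h0 unfolding c_def f_def by simp
          next
            case nS0: False
            show ?thesis
            proof (cases "i \<in> S1")
              case True
              with \<open>x \<in> region S0 S1 \<and> _\<close> have "x$i \<noteq> 0" unfolding region_def by auto
              then show ?thesis using True nS0 r cg2 unfolding c_def f_def by simp
            next
              case False
              show ?thesis
              proof (cases "x$i = 0")
                case True
                then have "ereal (f i (x$i)) = 0" using h0 unfolding f_def by (simp add: zero_ereal_def)
                moreover have "c i = max (convex_conj h (v$i) - ereal lam) 0"
                  using False nS0 unfolding c_def by simp
                ultimately show ?thesis by (metis max.cobounded2)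
              next
                case x0: False
                have "ereal (f i (x$i)) \<le> convex_conj h (v$i) - ereal lam"
                  using x0 r cg2 unfolding f_def by simp
                then show ?thesis using False nS0 unfolding c_def
                  by (simp add: max.coboundedI1)
              qed
            qed
          qed
        qed
        then have "(\<Sum>i\<in>UNIV. ereal (f i (x$i))) \<le> sum c UNIV" by (rule sum_mono)
        then show ?thesis using val[of x] True by (simp add: sum_ereal)
      qed
    qed
  next
    show "sum c UNIV \<le> convex_conj (g_nu lam h S0 S1) v"
    proof (rule ccontr)
      assume "\<not> ?thesis"
      then have "convex_conj (g_nu lam h S0 S1) v < sum c UNIV" by (simp only: not_le)
      then obtain z where z: "convex_conj (g_nu lam h S0 S1) v < ereal z" "ereal z < sum c UNIV"
        by (blast dest: ereal_dense2)
      have cn: "c i \<noteq> -\<infinity>" for i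
      proof -
        have cm: "convex_conj h (v$i) - ereal lam \<noteq> -\<infinity>"
        proof (cases "convex_conj h (v$i)")
          case (real r) then show ?thesis by simp
        next
          case PInf then show ?thesis by simp
        next
          case MInf then show ?thesis using conj0[of "v$i"] by simp
        qed
        have "max (convex_conj h (v$i) - ereal lam) 0 \<ge> 0" by (rule max.cobounded2)
        then have "max (convex_conj h (v$i) - ereal lam) 0 \<noteq> -\<infinity>" by auto
        then show ?thesis using cm unfolding c_def by auto
      qed
      have ap: "\<exists>t\<in>A i. M < f i t" if "ereal M < c i" for i M
      proof (cases "i \<in> S0")
        case True
        then have "M < 0" using that unfolding c_def by (simp add: zero_ereal_def)
        moreover have "f i 0 = 0" using h0 unfolding f_def by simp
        moreover have "0 \<in> A i" using True unfolding A_def by simp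
        ultimately show ?thesis by metis
      next
        case nS0: False
        show ?thesis
        proof (cases "i \<in> S1")
          case True
          then have hM: "ereal M < convex_conj h (v$i) - ereal lam" using that nS0 unfolding c_def by simp
          obtain t where "t \<noteq> 0 \<and> h t < \<infinity> \<and> M < v$i * t - real_of_ereal (h t) - lam"
            using S1_case[OF proper convex h0 acc hM] by blast
          then show ?thesis using True nS0 unfolding A_def f_def by (intro bexI[of _ t]) auto
        next
          case False
          show ?thesis
          proof (cases "M < 0")
            case True
            moreover have "f i 0 = 0" using h0 unfolding f_def by simp
            moreover have "0 \<in> A i" using False nS0 h0 unfolding A_def by simp
            ultimately show ?thesis by metis
          next
            case M0: False
            then have hM: "ereal M < convex_conj h (v$i) - ereal lam" using that nS0 False unfolding c_def
              by (auto simp: less_max_iff_disj)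
            obtain t where "t \<noteq> 0 \<and> h t < \<infinity> \<and> M < v$i * t - real_of_ereal (h t) - lam"
              using S1_case[OF proper convex h0 acc hM] by blast
            then show ?thesis using False nS0 unfolding A_def f_def by (intro bexI[of _ t]) auto
          qed
        qed
      qed
      obtain x where x: "\<forall>i\<in>UNIV. x i \<in> A i" "z < (\<Sum>i\<in>UNIV. f i (x i))"
        using sum_approx[of UNIV c A f z] ap cn z(2) by auto
      define X :: "real ^ 'n" where "X = (\<chi> i. x i)"
      have XA: "X$i \<in> A i" for i using x(1) unfolding X_def by simp
      have Xr: "X \<in> region S0 S1"
      proof -
        have "X$i = 0" if "i \<in> S0" for i using XA[of i] that unfolding A_def by simp
        moreover have "X$i \<noteq> 0" if "i \<in> S1" for i
        proof -
          have "i \<notin> S0" using that partition(2) by blast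
          then show ?thesis using XA[of i] that unfolding A_def by simp
        qed
        ultimately show ?thesis unfolding region_def by auto
      qed
      have Xh: "\<forall>i. h (X$i) < \<infinity>"
      proof
        fix i show "h (X$i) < \<infinity>" using XA[of i] h0 unfolding A_def by (auto split: if_splits)
      qed
      have "ereal z < ereal (v \<bullet> X) - g_nu lam h S0 S1 X"
        using val[OF Xr Xh] x(2) unfolding X_def by simp
      also have "\<dots> \<le> convex_conj (g_nu lam h S0 S1) v"
        unfolding convex_conj_def by (rule SUP_upper) simp
      finally show False using z(1) by simp
    qed
  qed
qed

end
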